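(* Let $\mathcal{F}$ be the set of all non-increasing functions $f:[0,1]\to\mathbb{R}$. Then $\mathsf{dis}(\mathcal{F}) \le 2$.
   Context: For a measurable space $\mathcal{X}$ and a class $\mathcal{F}$ of measurable functions $\mathcal{X}\to\mathbb{R}$, the disagreement coefficient is $$\mathsf{dis}(\mathcal{F}) = \sup_{\varepsilon,\delta>0}\ \sup_{\nu\in\Delta(\mathcal{X})} \frac{\delta^2}{\varepsilon^2}\,\mathbb{P}_{p\sim\nu}\Big(\exists f\in\mathcal{F}:\ \mathbb{E}_{q\sim\nu}[f(q)^2]\le\varepsilon^2\ \text{and}\ |f(p)|>\delta\Big),$$ where $\Delta(\mathcal{X})$ is the set of probability measures on $\mathcal{X}$. *)

theory Defs
  imports "HOL-Probability.Probability"
begin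

definition prob_measures :: "'a measure \<Rightarrow> 'a measure set" where
  "prob_measures X = {\<nu>. prob_space \<nu> \<and> sets \<nu> = sets X}"

definition dis :: "'a measure \<Rightarrow> ('a \<Rightarrow> real) set \<Rightarrow> ereal" where
  "dis X F = (SUP t \<in> {(\<epsilon>, \<delta>, \<nu>). \<epsilon> > 0 \<and> \<delta> > 0 \<and> \<nu> \<in> prob_measures X}.
      (case t of (\<epsilon>, \<delta>, \<nu>) \<Rightarrow>
        ereal (\<delta>\<^sup>2 / \<epsilon>\<^sup>2 * measure \<nu>
          {p \<in> space \<nu>. \<exists>f\<in>F. (\<integral>q. (f q)\<^sup>2 \<partial>\<nu>) \<le> \<epsilon>\<^sup>2 \<and> \<bar>f p\<bar> > \<delta>})))"

definition unit_interval :: "real measure" where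
  "unit_interval = restrict_space borel {0..1}"

definition nonincreasing_fns :: "(real \<Rightarrow> real) set" where
  "nonincreasing_fns = {f. \<forall>x\<in>{0..1}. \<forall>y\<in>{0..1}. x \<le> y \<longrightarrow> f y \<le> f x}"

end

theory Submission
  imports Defs
begin

lemma space_ui: "space unit_interval = {0..1}"
  by (simp add: unit_interval_def space_restrict_space)

lemma le_set_ui: "{x\<in>{0..1::real}. x \<le> a} \<in> sets unit_interval"
proof -
  have "{x\<in>{0..1::real}. x \<le> a} = {0..1} \<inter> {..a}" by auto
  then show ?thesis unfolding unit_interval_def sets_restrict_space by auto
qed

lemma ge_set_ui: "{x\<in>{0..1::real}. a \<le> x} \<in> sets unit_interval"
proof -
  have "{x\<in>{0..1::real}. a \<le> x} = {0..1} \<inter> {a..}" by auto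
  then show ?thesis unfolding unit_interval_def sets_restrict_space by auto
qed

lemma meas_f:
  fixes f :: "real \<Rightarrow> real" and M :: "real measure"
  assumes sp: "sets M = sets unit_interval" and f: "f \<in> nonincreasing_fns"
  shows "f \<in> borel_measurable M"
proof -
  have "mono_on {0..1} (\<lambda>x. - f x)"
    using f unfolding nonincreasing_fns_def mono_on_def by auto
  then have "(\<lambda>x. - f x) \<in> borel_measurable unit_interval"
    unfolding unit_interval_def by (rule borel_measurable_mono_on_fnc)
  then have "(\<lambda>x. - (- f x)) \<in> borel_measurable unit_interval" by measurable
  then have "f \<in> borel_measurable unit_interval" by simp
  then show ?thesis by (subst measurable_cong_sets[OF sp refl])
qed

lemma int_bound:
  fixes f :: "real \<Rightarrow> real" and M :: "real measure" and T :: "real set"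
  assumes sp: "sets M = sets unit_interval" and P: "prob_space M"
    and f: "f \<in> nonincreasing_fns" and T: "T \<in> sets M"
    and pt: "\<And>x. x \<in> {0..1} \<Longrightarrow> x \<in> T \<Longrightarrow> \<delta>\<^sup>2 \<le> (f x)\<^sup>2"
  shows "\<delta>\<^sup>2 * measure M T \<le> (\<integral>q. (f q)\<^sup>2 \<partial>M)"
proof -
  interpret prob_space M by (rule P)
  have spM: "space M = {0..1}" using sets_eq_imp_space_eq[OF sp] space_ui by simp
  have fm: "f \<in> borel_measurable M" by (rule meas_f[OF sp f])
  have bnd: "\<And>x. x \<in> space M \<Longrightarrow> norm ((f x)\<^sup>2) \<le> (max \<bar>f 0\<bar> \<bar>f 1\<bar>)\<^sup>2"
  proof -
    fix x assume "x \<in> space M"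
    then have x: "0 \<le> x" "x \<le> 1" using spM by auto
    have "f 1 \<le> f x" "f x \<le> f 0" using f x unfolding nonincreasing_fns_def by auto
    then have "\<bar>f x\<bar> \<le> max \<bar>f 0\<bar> \<bar>f 1\<bar>" by auto
    then show "norm ((f x)\<^sup>2) \<le> (max \<bar>f 0\<bar> \<bar>f 1\<bar>)\<^sup>2"
      by (metis abs_ge_zero power2_abs power_mono real_norm_def abs_power2)
  qed
  have int: "integrable M (\<lambda>q. (f q)\<^sup>2)"
    by (rule integrable_const_bound[where B="(max \<bar>f 0\<bar> \<bar>f 1\<bar>)\<^sup>2"])
       (use bnd fm in auto)
  have "\<delta>\<^sup>2 * measure M T = (\<integral>q. \<delta>\<^sup>2 * indicator T q \<partial>M)"
    using T sets.sets_into_space[OF T] by (simp add: Int_absorb2)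
  also have "\<dots> \<le> (\<integral>q. (f q)\<^sup>2 \<partial>M)"
  proof (rule integral_mono)
    show "integrable M (\<lambda>q. \<delta>\<^sup>2 * indicator T q)" using T
      by (intro integrable_mult_right integrable_real_indicator) (auto simp: emeasure_eq_measure)
    show "integrable M (\<lambda>q. (f q)\<^sup>2)" by (rule int)
    fix x assume "x \<in> space M"
    then show "\<delta>\<^sup>2 * indicator T x \<le> (f x)\<^sup>2" using pt spM
      by (auto simp: indicator_def)
  qed
  finally show ?thesis .
qed


lemma cover_down:
  fixes M :: "real measure" and A :: "real set" and c :: real
  assumes sp: "sets M = sets unit_interval" and P: "prob_space M"
    and A: "A \<subseteq> {0..1}" and c: "c \<ge> 0"
    and bnd: "\<And>p. p \<in> A \<Longrightarrow> measure M {x\<in>{0..1}. x \<le> p} \<le> c"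
  shows "\<exists>T\<in>sets M. A \<subseteq> T \<and> measure M T \<le> c"
proof -
  interpret prob_space M by (rule P)
  have LS: "\<And>a. {x\<in>{0..1::real}. x \<le> a} \<in> sets M" using le_set_ui sp by simp
  show ?thesis
  proof (cases "A = {}")
    case True then show ?thesis using c by (intro bexI[of _ "{}"]) auto
  next
    case ne: False
    have bdd: "bdd_above A" using A by (intro bdd_aboveI[of _ 1]) auto
    define a where "a = Sup A"
    have up: "\<And>x. x \<in> A \<Longrightarrow> x \<le> a" unfolding a_def using bdd by (simp add: cSup_upper)
    show ?thesis
    proof (cases "a \<in> A")
      case True
      then show ?thesis using LS[of a] bnd[OF True] up A by (intro bexI[of _ "{x\<in>{0..1}. x \<le> a}"]) auto
    next
      case False
      define Tn where "Tn = (\<lambda>n::nat. {x\<in>{0..1::real}. x \<le> a - 1 / real (Suc n)})"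
      have rng: "range Tn \<subseteq> sets M" unfolding Tn_def using LS by auto
      have inc: "incseq Tn"
      proof (rule incseq_SucI)
        fix n
        have "1 / real (Suc (Suc n)) \<le> 1 / real (Suc n)" by (simp add: frac_le)
        then show "Tn n \<subseteq> Tn (Suc n)" unfolding Tn_def by auto
      qed
      have lim: "(\<lambda>i. measure M (Tn i)) \<longlonglongrightarrow> measure M (\<Union>i. Tn i)"
        by (rule finite_Lim_measure_incseq[OF rng inc])
      have each: "measure M (Tn n) \<le> c" for n
      proof -
        have "a - 1 / real (Suc n) < Sup A" unfolding a_def[symmetric] by simp
        then obtain p where p: "p \<in> A" "a - 1 / real (Suc n) < p"
          using less_cSup_iff[OF ne bdd] by auto
        have "Tn n \<subseteq> {x\<in>{0..1}. x \<le> p}" unfolding Tn_def using p by auto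
        then have "measure M (Tn n) \<le> measure M {x\<in>{0..1}. x \<le> p}"
          by (intro finite_measure_mono LS)
        then show ?thesis using bnd[OF p(1)] by linarith
      qed
      have "measure M (\<Union>i. Tn i) \<le> c"
        by (rule LIMSEQ_le_const2[OF lim]) (use each in auto)
      moreover have "A \<subseteq> (\<Union>i. Tn i)"
      proof
        fix x assume x: "x \<in> A"
        then have "x < a" using up[OF x] False by (cases "x = a") auto
        then obtain n where n: "inverse (real (Suc n)) < a - x" using reals_Archimedean[of "a - x"] by auto
        then have "x \<le> a - 1 / real (Suc n)" by (simp add: field_simps inverse_eq_divide)
        then show "x \<in> (\<Union>i. Tn i)" unfolding Tn_def using x A by auto
      qed
      moreover have "(\<Union>i. Tn i) \<in> sets M" using rng by auto
      ultimately show ?thesis by blast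
    qed
  qed
qed

lemma cover_up:
  fixes M :: "real measure" and A :: "real set" and c :: real
  assumes sp: "sets M = sets unit_interval" and P: "prob_space M"
    and A: "A \<subseteq> {0..1}" and c: "c \<ge> 0"
    and bnd: "\<And>p. p \<in> A \<Longrightarrow> measure M {x\<in>{0..1}. p \<le> x} \<le> c"
  shows "\<exists>T\<in>sets M. A \<subseteq> T \<and> measure M T \<le> c"
proof -
  interpret prob_space M by (rule P)
  have LS: "\<And>a. {x\<in>{0..1::real}. a \<le> x} \<in> sets M" using ge_set_ui sp by simp
  show ?thesis
  proof (cases "A = {}")
    case True then show ?thesis using c by (intro bexI[of _ "{}"]) auto
  next
    case ne: False
    have bdd: "bdd_below A" using A by (intro bdd_belowI[of _ 0]) auto
    define a where "a = Inf A"
    have up: "\<And>x. x \<in> A \<Longrightarrow> a \<le> x" unfolding a_def using bdd by (simp add: cInf_lower)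
    show ?thesis
    proof (cases "a \<in> A")
      case True
      then show ?thesis using LS[of a] bnd[OF True] up A by (intro bexI[of _ "{x\<in>{0..1}. a \<le> x}"]) auto
    next
      case False
      define Tn where "Tn = (\<lambda>n::nat. {x\<in>{0..1::real}. a + 1 / real (Suc n) \<le> x})"
      have rng: "range Tn \<subseteq> sets M" unfolding Tn_def using LS by auto
      have inc: "incseq Tn"
      proof (rule incseq_SucI)
        fix n
        have "1 / real (Suc (Suc n)) \<le> 1 / real (Suc n)" by (simp add: frac_le)
        then show "Tn n \<subseteq> Tn (Suc n)" unfolding Tn_def by auto
      qed
      have lim: "(\<lambda>i. measure M (Tn i)) \<longlonglongrightarrow> measure M (\<Union>i. Tn i)"
        by (rule finite_Lim_measure_incseq[OF rng inc])
      have each: "measure M (Tn n) \<le> c" for n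
      proof -
        have "Inf A < a + 1 / real (Suc n)" unfolding a_def[symmetric] by simp
        then obtain p where p: "p \<in> A" "p < a + 1 / real (Suc n)"
          using cInf_less_iff[OF ne bdd] by auto
        have "Tn n \<subseteq> {x\<in>{0..1}. p \<le> x}" unfolding Tn_def using p by auto
        then have "measure M (Tn n) \<le> measure M {x\<in>{0..1}. p \<le> x}"
          by (intro finite_measure_mono LS)
        then show ?thesis using bnd[OF p(1)] by linarith
      qed
      have "measure M (\<Union>i. Tn i) \<le> c"
        by (rule LIMSEQ_le_const2[OF lim]) (use each in auto)
      moreover have "A \<subseteq> (\<Union>i. Tn i)"
      proof
        fix x assume x: "x \<in> A"
        then have "a < x" using up[OF x] False by (cases "x = a") auto
        then obtain n where n: "inverse (real (Suc n)) < x - a" using reals_Archimedean[of "x - a"] by auto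
        then have "a + 1 / real (Suc n) \<le> x" by (simp add: field_simps inverse_eq_divide)
        then show "x \<in> (\<Union>i. Tn i)" unfolding Tn_def using x A by auto
      qed
      moreover have "(\<Union>i. Tn i) \<in> sets M" using rng by auto
      ultimately show ?thesis by blast
    qed
  qed
qed


lemma sq_ge: "0 < (\<delta>::real) \<Longrightarrow> \<delta> < y \<Longrightarrow> \<delta>\<^sup>2 \<le> y\<^sup>2"
  by (simp add: power_mono)

lemma sq_ge2: "0 < (\<delta>::real) \<Longrightarrow> y < - \<delta> \<Longrightarrow> \<delta>\<^sup>2 \<le> y\<^sup>2"
  using sq_ge[of \<delta> "- y"] by simp

lemma one_case:
  fixes \<epsilon> \<delta> :: real and \<nu> :: "real measure"
  assumes e: "\<epsilon> > 0" and d: "\<delta> > 0" and nu: "\<nu> \<in> prob_measures unit_interval"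
  shows "\<delta>\<^sup>2 / \<epsilon>\<^sup>2 * measure \<nu>
          {p \<in> space \<nu>. \<exists>f\<in>nonincreasing_fns. (\<integral>q. (f q)\<^sup>2 \<partial>\<nu>) \<le> \<epsilon>\<^sup>2 \<and> \<bar>f p\<bar> > \<delta>} \<le> 2"
proof -
  have P: "prob_space \<nu>" and sp: "sets \<nu> = sets unit_interval" using nu by (auto simp: prob_measures_def)
  interpret prob_space \<nu> by (rule P)
  have spM: "space \<nu> = {0..1}" using sets_eq_imp_space_eq[OF sp] space_ui by simp
  define c where "c = \<epsilon>\<^sup>2 / \<delta>\<^sup>2"
  have c0: "c \<ge> 0" unfolding c_def by simp
  define S where "S = {p \<in> space \<nu>. \<exists>f\<in>nonincreasing_fns. (\<integral>q. (f q)\<^sup>2 \<partial>\<nu>) \<le> \<epsilon>\<^sup>2 \<and> \<bar>f p\<bar> > \<delta>}"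
  define A where "A = {p \<in> space \<nu>. \<exists>f\<in>nonincreasing_fns. (\<integral>q. (f q)\<^sup>2 \<partial>\<nu>) \<le> \<epsilon>\<^sup>2 \<and> f p > \<delta>}"
  define B where "B = {p \<in> space \<nu>. \<exists>f\<in>nonincreasing_fns. (\<integral>q. (f q)\<^sup>2 \<partial>\<nu>) \<le> \<epsilon>\<^sup>2 \<and> f p < - \<delta>}"
  have SAB: "S \<subseteq> A \<union> B" unfolding S_def A_def B_def by (auto simp: abs_if split: if_splits)
  have dpos: "\<delta>\<^sup>2 > 0" using d by simp
  have fromint: "m \<le> c" if "\<delta>\<^sup>2 * m \<le> \<epsilon>\<^sup>2" for m
    using that dpos unfolding c_def by (simp add: field_simps)
  have "\<exists>T\<in>sets \<nu>. A \<subseteq> T \<and> measure \<nu> T \<le> c"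
  proof (rule cover_down[OF sp P _ c0])
    show "A \<subseteq> {0..1}" unfolding A_def using spM by auto
    fix p assume "p \<in> A"
    then obtain f where f: "f \<in> nonincreasing_fns" "(\<integral>q. (f q)\<^sup>2 \<partial>\<nu>) \<le> \<epsilon>\<^sup>2" "f p > \<delta>" "p \<in> {0..1}"
      unfolding A_def using spM by auto
    have "\<delta>\<^sup>2 * measure \<nu> {x\<in>{0..1}. x \<le> p} \<le> (\<integral>q. (f q)\<^sup>2 \<partial>\<nu>)"
    proof (rule int_bound[OF sp P f(1)])
      show "{x\<in>{0..1}. x \<le> p} \<in> sets \<nu>" using le_set_ui sp by simp
      fix x assume "x \<in> {0::real..1}" "x \<in> {x\<in>{0..1}. x \<le> p}"
      then have "f p \<le> f x" using f(1,4) unfolding nonincreasing_fns_def by auto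
      then show "\<delta>\<^sup>2 \<le> (f x)\<^sup>2" using sq_ge[OF d] f(3) by auto
    qed
    then have "\<delta>\<^sup>2 * measure \<nu> {x\<in>{0..1}. x \<le> p} \<le> \<epsilon>\<^sup>2" using f(2) by linarith
    then show "measure \<nu> {x\<in>{0..1}. x \<le> p} \<le> c" by (rule fromint)
  qed
  then obtain TA where TA: "TA \<in> sets \<nu>" "A \<subseteq> TA" "measure \<nu> TA \<le> c" by blast
  have "\<exists>T\<in>sets \<nu>. B \<subseteq> T \<and> measure \<nu> T \<le> c"
  proof (rule cover_up[OF sp P _ c0])
    show "B \<subseteq> {0..1}" unfolding B_def using spM by auto
    fix p assume "p \<in> B"
    then obtain f where f: "f \<in> nonincreasing_fns" "(\<integral>q. (f q)\<^sup>2 \<partial>\<nu>) \<le> \<epsilon>\<^sup>2" "f p < - \<delta>" "p \<in> {0..1}"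
      unfolding B_def using spM by auto
    have "\<delta>\<^sup>2 * measure \<nu> {x\<in>{0..1}. p \<le> x} \<le> (\<integral>q. (f q)\<^sup>2 \<partial>\<nu>)"
    proof (rule int_bound[OF sp P f(1)])
      show "{x\<in>{0..1}. p \<le> x} \<in> sets \<nu>" using ge_set_ui sp by simp
      fix x assume "x \<in> {0::real..1}" "x \<in> {x\<in>{0..1}. p \<le> x}"
      then have "f x \<le> f p" using f(1,4) unfolding nonincreasing_fns_def by auto
      then show "\<delta>\<^sup>2 \<le> (f x)\<^sup>2" using sq_ge2[OF d] f(3) by auto
    qed
    then have "\<delta>\<^sup>2 * measure \<nu> {x\<in>{0..1}. p \<le> x} \<le> \<epsilon>\<^sup>2" using f(2) by linarith
    then show "measure \<nu> {x\<in>{0..1}. p \<le> x} \<le> c" by (rule fromint)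
  qed
  then obtain TB where TB: "TB \<in> sets \<nu>" "B \<subseteq> TB" "measure \<nu> TB \<le> c" by blast
  have mS: "measure \<nu> S \<le> 2 * c"
  proof (cases "S \<in> sets \<nu>")
    case True
    have "measure \<nu> S \<le> measure \<nu> (TA \<union> TB)"
      using SAB TA TB by (intro finite_measure_mono) auto
    also have "\<dots> \<le> measure \<nu> TA + measure \<nu> TB"
      using TA TB by (intro measure_Un_le) auto
    finally show ?thesis using TA TB by linarith
  next
    case False
    then show ?thesis using c0 by (simp add: measure_notin_sets)
  qed
  have "\<delta>\<^sup>2 / \<epsilon>\<^sup>2 * measure \<nu> S \<le> \<delta>\<^sup>2 / \<epsilon>\<^sup>2 * (2 * c)"
    by (rule mult_left_mono[OF mS]) simp
  also have "\<dots> = 2" unfolding c_def using e d by (simp add: field_simps)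
  finally show ?thesis unfolding S_def .
qed

lemma one_case_e:
  fixes \<epsilon> \<delta> :: real and \<nu> :: "real measure"
  assumes "\<epsilon> > 0 \<and> \<delta> > 0 \<and> \<nu> \<in> prob_measures unit_interval"
  shows "ereal (\<delta>\<^sup>2 / \<epsilon>\<^sup>2 * measure \<nu>
          {p \<in> space \<nu>. \<exists>f\<in>nonincreasing_fns. (\<integral>q. (f q)\<^sup>2 \<partial>\<nu>) \<le> \<epsilon>\<^sup>2 \<and> \<bar>f p\<bar> > \<delta>}) \<le> 2"
  using one_case[of \<epsilon> \<delta> \<nu>] assms by simp

theorem mainTheorem3:
  shows "dis unit_interval nonincreasing_fns \<le> 2"
  unfolding dis_def
  apply (rule SUP_least)
  apply (simp only: split_paired_all case_prod_conv mem_Collect_eq)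
  apply (erule one_case_e)
  done

end
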